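(* Let $D$ be the minimal Dress ring of $\mathbb{R}(X)$. Then: (1) for all $a,b\in D$ with $aD+bD=D$, the element $a^2+b^2$ is a unit of $D$ (so $D$ has square stable range one); (2) for $a=X/(1+X^2)$ and $b=(X^2-1)/(1+X^2)$ one has $a,b\in D$ and $aD+bD=D$, but $a+bz$ is not a unit of $D$ for any $z\in D$ (so $D$ does not have $1$ in the stable range).
   Context: $D$ denotes the minimal Dress ring of the field $\mathbb{R}(X)$, i.e. the subring of $\mathbb{R}(X)$ generated by $\mathbb{Z}$ and all elements $1/(1+h^2)$ with $h\in\mathbb{R}(X)$. *)

theory Defs
  imports "HOL-Computational_Algebra.Polynomial" "HOL-Computational_Algebra.Fraction_Field"
begin

type_synonym ratfun = "real poly fract"

definition X :: ratfun where
  "X = Fract [:0, 1:] 1"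

inductive_set dress_min :: "ratfun set" where
  int_mem: "of_int k \<in> dress_min"
| gen_mem: "1 / (1 + h\<^sup>2) \<in> dress_min"
| add_mem: "a \<in> dress_min \<Longrightarrow> b \<in> dress_min \<Longrightarrow> a + b \<in> dress_min"
| neg_mem: "a \<in> dress_min \<Longrightarrow> - a \<in> dress_min"
| mult_mem: "a \<in> dress_min \<Longrightarrow> b \<in> dress_min \<Longrightarrow> a * b \<in> dress_min"

definition unit_in :: "'a::comm_ring_1 set \<Rightarrow> 'a \<Rightarrow> bool" where
  "unit_in R u \<longleftrightarrow> u \<in> R \<and> (\<exists>v\<in>R. u * v = 1)"

definition ideal2 :: "'a::comm_ring_1 set \<Rightarrow> 'a \<Rightarrow> 'a \<Rightarrow> 'a set" where
  "ideal2 R a b = {a * x + b * y | x y. x \<in> R \<and> y \<in> R}"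

end

theory Submission
  imports Defs "HOL-Computational_Algebra.Polynomial_Factorial" "HOL-Computational_Algebra.Field_as_Ring"
begin

lemma coprime_rep:
  fixes h :: ratfun
  obtains p q where "h = Fract p q" "q \<noteq> 0" "\<And>t. poly p t = 0 \<Longrightarrow> poly q t \<noteq> 0"
proof -
  obtain p0 q0 where h: "h = Fract p0 q0" "q0 \<noteq> 0" by (cases h) auto
  define g where "g = gcd p0 q0"
  have g0: "g \<noteq> 0" using h(2) by (simp add: g_def)
  obtain p where p: "p0 = g * p" unfolding g_def by (metis gcd_dvd1 dvdE)
  obtain q where q: "q0 = g * q" unfolding g_def by (metis gcd_dvd2 dvdE)
  have q0: "q \<noteq> 0" using h(2) q by auto
  have hh: "h = Fract p q" using h p q g0 by (simp add: mult_fract_cancel)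
  have cop: "coprime p q"
  proof -
    have "p = p0 div g" "q = q0 div g" using p q g0 by auto
    then show ?thesis using div_gcd_coprime[of p0 q0] h(2) by (simp add: g_def)
  qed
  have "poly q t \<noteq> 0" if "poly p t = 0" for t
  proof
    assume "poly q t = 0"
    then have "[:-t,1:] dvd q" "[:-t,1:] dvd p" using that by (metis poly_eq_0_iff_dvd)+
    then have "is_unit [:-t,1:]" using cop coprime_common_divisor by blast
    then show False by (simp add: is_unit_iff_degree)
  qed
  then show ?thesis using that hh q0 by blast
qed

lemma rep:
  assumes "f \<in> dress_min"
  shows "\<exists>p q. f = Fract p q \<and> (\<forall>t. poly q t \<noteq> 0)"
  using assms
proof (induction rule: dress_min.induct)
  case (int_mem k)
  have "(of_int k :: ratfun) = Fract (of_int k) 1"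
  proof (cases k rule: int_cases)
    case (nonneg n)
    then show ?thesis using of_nat_fract[of n] by simp
  next
    case (neg n)
    have "(of_int k :: ratfun) = - of_nat (Suc n)" using neg by simp
    also have "\<dots> = - Fract (of_nat (Suc n)) 1" by (simp only: of_nat_fract)
    also have "\<dots> = Fract (- of_nat (Suc n)) 1" by (rule minus_fract)
    also have "\<dots> = Fract (of_int k) 1" using neg by simp
    finally show ?thesis .
  qed
  moreover have "\<forall>t. poly (1::real poly) t \<noteq> 0" by simp
  ultimately show ?case by blast
next
  case (gen_mem h)
  obtain p q where h: "h = Fract p q" "q \<noteq> 0" "\<And>t. poly p t = 0 \<Longrightarrow> poly q t \<noteq> 0"
    using coprime_rep[of h] by blast
  have ne: "poly (q*q + p*p) t \<noteq> 0" for t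
  proof -
    have "poly q t * poly q t + poly p t * poly p t \<noteq> 0"
      using h(3)[of t] sum_squares_eq_zero_iff[of "poly q t" "poly p t"] by blast
    then show ?thesis by simp
  qed
  have nz: "q*q + p*p \<noteq> 0" using ne by (metis poly_0)
  have "1 / (1 + h\<^sup>2) = Fract (q*q) (q*q+p*p)"
    using h(2) nz by (simp add: h power2_eq_square One_fract_def divide_fract_def algebra_simps)
  then show ?case using ne by blast
next
  case (add_mem a b)
  then obtain p q r s where "a = Fract p q" "\<forall>t. poly q t \<noteq> 0" "b = Fract r s" "\<forall>t. poly s t \<noteq> 0" by blast
  moreover have "q \<noteq> 0" "s \<noteq> 0" using calculation by (metis poly_0)+
  ultimately show ?case by (intro exI[of _ "p*s+r*q"] exI[of _ "q*s"]) auto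
next
  case (neg_mem a)
  then obtain p q where "a = Fract p q" "\<forall>t. poly q t \<noteq> 0" by blast
  then show ?case by (intro exI[of _ "-p"] exI[of _ q]) simp
next
  case (mult_mem a b)
  then obtain p q r s where "a = Fract p q" "\<forall>t. poly q t \<noteq> 0" "b = Fract r s" "\<forall>t. poly s t \<noteq> 0" by blast
  then show ?case by (intro exI[of _ "p*r"] exI[of _ "q*s"]) auto
qed

lemma one_plus_sq_nz: "1 + (h::ratfun)\<^sup>2 \<noteq> 0"
proof -
  obtain p q where h: "h = Fract p q" "q \<noteq> 0" "\<And>t. poly p t = 0 \<Longrightarrow> poly q t \<noteq> 0"
    using coprime_rep[of h] by blast
  have "poly (q*q + p*p) 0 \<noteq> 0"
    using h(3)[of 0] by (auto simp add: sum_squares_eq_zero_iff)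
  then have nz: "q*q + p*p \<noteq> 0" by (metis poly_0)
  show ?thesis using h(2) nz by (simp add: h power2_eq_square One_fract_def Zero_fract_def eq_fract algebra_simps)
qed


lemma num_fract: "(numeral n :: 'a::idom fract) = Fract (numeral n) 1"
  by (metis of_nat_fract of_nat_numeral)

lemmas PS = X_def power2_eq_square One_fract_def eq_fract one_pCons numeral_poly num_fract

lemma X_simps:
  "X / (1 + X\<^sup>2) = Fract [:0,1:] [:1,0,1:]"
  "(X\<^sup>2 - 1) / (1 + X\<^sup>2) = Fract [:-1,0,1:] [:1,0,1:]"
  by (simp_all add: PS)

lemma a_eq: "X / (1 + X\<^sup>2) = 1 / (1 + ((X - 1)/(X + 1))\<^sup>2) + - (1 / (1 + 1\<^sup>2))"
  by (simp add: PS)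

lemma b_eq: "(X\<^sup>2 - 1) / (1 + X\<^sup>2) = 1 + (- (1 / (1 + X\<^sup>2)) + - (1 / (1 + X\<^sup>2)))"
  by (simp add: PS)

lemma four_eq: "4 * (X / (1 + X\<^sup>2)) * (X / (1 + X\<^sup>2)) + ((X\<^sup>2 - 1) / (1 + X\<^sup>2)) * ((X\<^sup>2 - 1) / (1 + X\<^sup>2)) = 1"
  by (simp add: PS)


lemma part1:
  "\<forall>a\<in>dress_min. \<forall>b\<in>dress_min.
            ideal2 dress_min a b = dress_min \<longrightarrow> unit_in dress_min (a\<^sup>2 + b\<^sup>2)"
proof (intro ballI impI)
  fix a b assume a: "a \<in> dress_min" and b: "b \<in> dress_min" and I: "ideal2 dress_min a b = dress_min"
  have "(1::ratfun) \<in> dress_min" using int_mem[of 1] by simp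
  then obtain x y where x: "x \<in> dress_min" and y: "y \<in> dress_min" and e: "1 = a*x + b*y"
    using I unfolding ideal2_def by blast
  define h where "h = a*y - b*x"
  have hD: "h \<in> dress_min" unfolding h_def using a b x y
    by (metis diff_conv_add_uminus add_mem neg_mem mult_mem)
  define v where "v = (x*x + y*y) * (1 / (1 + h\<^sup>2))"
  have vD: "v \<in> dress_min" unfolding v_def using x y
    by (intro mult_mem add_mem gen_mem)
  have uD: "a\<^sup>2 + b\<^sup>2 \<in> dress_min" unfolding power2_eq_square using a b
    by (intro mult_mem add_mem)
  have "(a\<^sup>2 + b\<^sup>2) * (x*x + y*y) = (a*x + b*y)\<^sup>2 + h\<^sup>2"
    by (simp add: h_def power2_eq_square algebra_simps)
  then have "(a\<^sup>2 + b\<^sup>2) * (x*x + y*y) = 1 + h\<^sup>2" using e by simp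
  then have "(a\<^sup>2 + b\<^sup>2) * v = 1"
    unfolding v_def using one_plus_sq_nz[of h] by (metis mult.assoc divide_self_if times_divide_eq_right mult_1_right)
  then show "unit_in dress_min (a\<^sup>2 + b\<^sup>2)" unfolding unit_in_def using uD vD by blast
qed

lemma aD: "X / (1 + X\<^sup>2) \<in> dress_min"
  unfolding a_eq by (intro add_mem neg_mem gen_mem)

lemma bD: "(X\<^sup>2 - 1) / (1 + X\<^sup>2) \<in> dress_min"
  unfolding b_eq using int_mem[of 1] by (intro add_mem neg_mem gen_mem) simp_all

lemma ideal_ab: "ideal2 dress_min (X / (1 + X\<^sup>2)) ((X\<^sup>2 - 1) / (1 + X\<^sup>2)) = dress_min"
proof
  show "ideal2 dress_min (X / (1 + X\<^sup>2)) ((X\<^sup>2 - 1) / (1 + X\<^sup>2)) \<subseteq> dress_min"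
    unfolding ideal2_def using aD bD by (blast intro: add_mem mult_mem)
next
  show "dress_min \<subseteq> ideal2 dress_min (X / (1 + X\<^sup>2)) ((X\<^sup>2 - 1) / (1 + X\<^sup>2))"
  proof
    fix d assume d: "d \<in> dress_min"
    let ?a = "X / (1 + X\<^sup>2)" and ?b = "(X\<^sup>2 - 1) / (1 + X\<^sup>2)"
    have 4: "(4::ratfun) \<in> dress_min" using int_mem[of 4] by simp
    have "d = ?a * (4 * ?a * d) + ?b * (?b * d)"
      using four_eq by (metis (no_types, lifting) distrib_right mult.assoc mult.commute mult_1_left)
    moreover have "4 * ?a * d \<in> dress_min" by (rule mult_mem[OF mult_mem[OF 4 aD] d])
    moreover have "?b * d \<in> dress_min" by (rule mult_mem[OF bD d])
    ultimately show "d \<in> ideal2 dress_min ?a ?b" unfolding ideal2_def by blast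
  qed
qed

lemma nz_of_nowhere: "(\<forall>t. poly q t \<noteq> 0) \<Longrightarrow> q \<noteq> 0"
  by (metis poly_0)

lemma not_unit:
  assumes z: "z \<in> dress_min"
  shows "\<not> unit_in dress_min (X / (1 + X\<^sup>2) + (X\<^sup>2 - 1) / (1 + X\<^sup>2) * z)"
proof
  assume U: "unit_in dress_min (X / (1 + X\<^sup>2) + (X\<^sup>2 - 1) / (1 + X\<^sup>2) * z)"
  let ?A = "Fract [:0,1:] [:1,0,1:] :: ratfun" and ?B = "Fract [:-1,0,1:] [:1,0,1:] :: ratfun"
  from U obtain v where uD: "?A + ?B * z \<in> dress_min" and vD: "v \<in> dress_min"
    and uv: "(?A + ?B * z) * v = 1"
    unfolding unit_in_def X_simps by blast
  obtain p q where pq: "?A + ?B * z = Fract p q" and qn: "\<forall>t. poly q t \<noteq> 0" using rep[OF uD] by blast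
  obtain r s where rs: "v = Fract r s" and sn: "\<forall>t. poly s t \<noteq> 0" using rep[OF vD] by blast
  obtain r' s' where zs: "z = Fract r' s'" and sn': "\<forall>t. poly s' t \<noteq> 0" using rep[OF z] by blast
  have q0: "q \<noteq> 0" "s \<noteq> 0" "s' \<noteq> 0" using qn sn sn' nz_of_nowhere by blast+
  have "Fract (p*r) (q*s) = Fract 1 1" using uv pq rs by (simp add: One_fract_def)
  then have "p * r = q * s" using q0 by (simp add: eq_fract)
  then have pn: "poly p t \<noteq> 0" for t
    using qn sn by (metis mult_eq_0_iff poly_mult)
  define N where "N = [:0,1:] * ([:1,0,1:] * s') + [:-1,0,1:] * r' * [:1,0,1:]"
  define Dn where "Dn = [:1,0,1:] * ([:1,0,1:] * s')"
  have d1: "[:1,0,1:] * s' \<noteq> 0" using q0 by (metis mult_eq_0_iff pCons_eq_0_iff one_neq_zero)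
  have Dn0: "Dn \<noteq> 0" unfolding Dn_def using q0 by (metis mult_eq_0_iff pCons_eq_0_iff one_neq_zero)
  have "?A + ?B * z = Fract N Dn"
    unfolding N_def Dn_def zs mult_fract by (rule add_fract[OF _ d1]) simp
  then have E: "N * q = p * Dn" using pq Dn0 q0 by (simp add: eq_fract)
  have E1: "poly (N * q) 1 = poly (p * Dn) 1" using E by simp
  have E2: "poly (N * q) (-1) = poly (p * Dn) (-1)" using E by simp
  have s1: "poly s' 1 \<noteq> 0" "poly s' (-1) \<noteq> 0" using sn' by auto
  have N1: "poly N 1 = 2 * poly s' 1" "poly Dn 1 = 4 * poly s' 1"
    by (simp_all add: N_def Dn_def algebra_simps)
  have N2: "poly N (-1) = -2 * poly s' (-1)" "poly Dn (-1) = 4 * poly s' (-1)"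
    by (simp_all add: N_def Dn_def algebra_simps)
  have "2 * poly s' 1 * poly q 1 = poly p 1 * (4 * poly s' 1)" using E1 by (simp only: poly_mult N1)
  then have "poly s' 1 * (poly q 1 - 2 * poly p 1) = 0" by algebra
  then have c1: "poly q 1 = 2 * poly p 1" using s1 by simp
  have "-2 * poly s' (-1) * poly q (-1) = poly p (-1) * (4 * poly s' (-1))" using E2 by (simp only: poly_mult N2)
  then have "poly s' (-1) * (poly q (-1) + 2 * poly p (-1)) = 0" by algebra
  then have c2: "poly q (-1) = -2 * poly p (-1)" using s1 by simp
  have neg: "poly (p*q) (-1) * poly (p*q) 1 < 0"
  proof -
    have "poly (p*q) 1 = 2 * (poly p 1)\<^sup>2" using c1 by (simp add: power2_eq_square)
    moreover have "poly (p*q) (-1) = -2 * (poly p (-1))\<^sup>2" using c2 by (simp add: power2_eq_square)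
    moreover have "(poly p 1)\<^sup>2 > 0" "(poly p (-1))\<^sup>2 > 0" using pn by auto
    ultimately show ?thesis by (simp add: mult_neg_pos)
  qed
  have lt: "(-1::real) < 1" by simp
  obtain t where "poly (p*q) t = 0" using poly_IVT[OF lt neg] by blast
  then have "poly p t * poly q t = 0" by (simp only: poly_mult)
  then show False using pn qn by (metis mult_eq_0_iff)
qed

theorem mainTheorem10:
  shows "(\<forall>a\<in>dress_min. \<forall>b\<in>dress_min.
            ideal2 dress_min a b = dress_min \<longrightarrow> unit_in dress_min (a\<^sup>2 + b\<^sup>2))
       \<and> (let a = X / (1 + X\<^sup>2); b = (X\<^sup>2 - 1) / (1 + X\<^sup>2) in
            a \<in> dress_min \<and> b \<in> dress_min \<and> ideal2 dress_min a b = dress_min \<and>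
            (\<forall>z\<in>dress_min. \<not> unit_in dress_min (a + b * z)))"
  unfolding Let_def using part1 aD bD ideal_ab not_unit by blast

end
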